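(* Let $\Gamma$ and $G$ be groups and let $H\le\Gamma\wr G$ be a subgroup such that $\mathrm{pr}(H)=G$ and such that, for some $1\neq g\in G$, $H\cap\Gamma^G$ surjects onto $\Gamma^{\{1,g\}}$ under the restriction map $f\mapsto f|_{\{1,g\}}$. Then for every subgroup $N$ with $[H,H]\le N\le\Gamma\wr G$, the group $N\cap\Gamma^G$ surjects onto $\Gamma^{\{1\}}$ under the restriction map $f\mapsto f|_{\{1\}}$.
   Context: The wreath product is $\Gamma\wr G=\Gamma^G\rtimes G$, where $\Gamma^G$ is the group (pointwise multiplication) of all functions $f\colon G\to\Gamma$, and $G$ acts from the right by $f^h(g)=f(hg)$ for $f\in\Gamma^G$, $g,h\in G$. $\mathrm{pr}\colon\Gamma\wr G\to G$, $(f,g)\mapsto g$, is the canonical projection. For $T\subseteq G$, $\Gamma^T$ denotes the functions $T\to\Gamma$. $[H,H]$ is the commutator subgroup. *)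

theory Defs
  imports "HOL-Algebra.Algebra" "HOL-Library.FuncSet"
begin

text \<open>An element \<open>(f, g)\<close> stands for the
  product \<open>f g\<close> with \<open>f \<in> \<Gamma>^G\<close> (extensional functions on the carrier of G) and
  \<open>g \<in> G\<close>. With the right action \<open>f^h(x) = f(h x)\<close> one has \<open>g f g^{-1} = f^{g^{-1}}\<close>,
  hence \<open>(f1,g1)(f2,g2) = (f1 * f2^{g1^{-1}}, g1 g2)\<close>.\<close>

definition wreath ::
  "('c, 'd) monoid_scheme \<Rightarrow> ('a, 'b) monoid_scheme \<Rightarrow> (('a \<Rightarrow> 'c) \<times> 'a) monoid" where
  "wreath \<Gamma> G =
    \<lparr> carrier = (carrier G \<rightarrow>\<^sub>E carrier \<Gamma>) \<times> carrier G,
      monoid.mult = (\<lambda>(f1, g1) (f2, g2).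
                ((\<lambda>x\<in>carrier G. f1 x \<otimes>\<^bsub>\<Gamma>\<^esub> f2 (inv\<^bsub>G\<^esub> g1 \<otimes>\<^bsub>G\<^esub> x)), g1 \<otimes>\<^bsub>G\<^esub> g2)),
      one = ((\<lambda>x\<in>carrier G. \<one>\<^bsub>\<Gamma>\<^esub>), \<one>\<^bsub>G\<^esub>) \<rparr>"

definition wr_pr :: "('a \<Rightarrow> 'c) \<times> 'a \<Rightarrow> 'a" where
  "wr_pr x = snd x"

definition wr_base ::
  "('c, 'd) monoid_scheme \<Rightarrow> ('a, 'b) monoid_scheme \<Rightarrow> (('a \<Rightarrow> 'c) \<times> 'a) set" where
  "wr_base \<Gamma> G = {(f, \<one>\<^bsub>G\<^esub>) | f. f \<in> carrier G \<rightarrow>\<^sub>E carrier \<Gamma>}"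

definition wr_restr :: "'a set \<Rightarrow> ('a \<Rightarrow> 'c) \<times> 'a \<Rightarrow> ('a \<Rightarrow> 'c)" where
  "wr_restr T x = restrict (fst x) T"

end

theory Submission
  imports Defs
begin

lemma wr_carrier: "carrier (wreath \<Gamma> G) = (carrier G \<rightarrow>\<^sub>E carrier \<Gamma>) \<times> carrier G"
  by (simp add: wreath_def)

lemma wr_mult: "(f1, g1) \<otimes>\<^bsub>wreath \<Gamma> G\<^esub> (f2, g2) =
   ((\<lambda>x\<in>carrier G. f1 x \<otimes>\<^bsub>\<Gamma>\<^esub> f2 (inv\<^bsub>G\<^esub> g1 \<otimes>\<^bsub>G\<^esub> x)), g1 \<otimes>\<^bsub>G\<^esub> g2)"
  by (simp add: wreath_def)

lemma wr_one: "\<one>\<^bsub>wreath \<Gamma> G\<^esub> = ((\<lambda>x\<in>carrier G. \<one>\<^bsub>\<Gamma>\<^esub>), \<one>\<^bsub>G\<^esub>)"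
  by (simp add: wreath_def)

lemma wr_group:
  assumes GA: "group \<Gamma>" and GG: "group G"
  shows "group (wreath \<Gamma> G)"
proof (rule groupI)
  interpret A: group \<Gamma> by fact
  interpret B: group G by fact
  show "\<one>\<^bsub>wreath \<Gamma> G\<^esub> \<in> carrier (wreath \<Gamma> G)"
    by (auto simp: wr_carrier wr_one)
  fix x y z
  assume x: "x \<in> carrier (wreath \<Gamma> G)" and y: "y \<in> carrier (wreath \<Gamma> G)"
  obtain f1 g1 where X: "x = (f1, g1)" by (cases x)
  obtain f2 g2 where Y: "y = (f2, g2)" by (cases y)
  show "x \<otimes>\<^bsub>wreath \<Gamma> G\<^esub> y \<in> carrier (wreath \<Gamma> G)"
    using x y unfolding X Y wr_carrier wr_mult by (auto simp: PiE_iff)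
  show "\<one>\<^bsub>wreath \<Gamma> G\<^esub> \<otimes>\<^bsub>wreath \<Gamma> G\<^esub> x = x"
    using x unfolding X wr_carrier wr_mult wr_one
    by (auto simp: PiE_iff extensional_def intro!: ext)
  show "\<exists>y\<in>carrier (wreath \<Gamma> G). y \<otimes>\<^bsub>wreath \<Gamma> G\<^esub> x = \<one>\<^bsub>wreath \<Gamma> G\<^esub>"
  proof (intro bexI)
    show "(\<lambda>t\<in>carrier G. inv\<^bsub>\<Gamma>\<^esub> f1 (g1 \<otimes>\<^bsub>G\<^esub> t), inv\<^bsub>G\<^esub> g1) \<otimes>\<^bsub>wreath \<Gamma> G\<^esub> x = \<one>\<^bsub>wreath \<Gamma> G\<^esub>"
      using x unfolding X wr_carrier wr_mult wr_one
      by (auto simp: PiE_iff intro!: ext)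
    show "(\<lambda>t\<in>carrier G. inv\<^bsub>\<Gamma>\<^esub> f1 (g1 \<otimes>\<^bsub>G\<^esub> t), inv\<^bsub>G\<^esub> g1) \<in> carrier (wreath \<Gamma> G)"
      using x unfolding X wr_carrier by (auto simp: PiE_iff)
  qed
  assume z: "z \<in> carrier (wreath \<Gamma> G)"
  obtain f3 g3 where Z: "z = (f3, g3)" by (cases z)
  show "x \<otimes>\<^bsub>wreath \<Gamma> G\<^esub> y \<otimes>\<^bsub>wreath \<Gamma> G\<^esub> z = x \<otimes>\<^bsub>wreath \<Gamma> G\<^esub> (y \<otimes>\<^bsub>wreath \<Gamma> G\<^esub> z)"
    using x y z unfolding X Y Z wr_carrier wr_mult
    by (auto simp: PiE_iff A.m_assoc B.m_assoc B.inv_mult_group intro!: ext)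
qed

lemma wr_inv:
  assumes GA: "group \<Gamma>" and GG: "group G"
    and "f \<in> carrier G \<rightarrow>\<^sub>E carrier \<Gamma>" "s \<in> carrier G"
  shows "inv\<^bsub>wreath \<Gamma> G\<^esub> (f, s) = ((\<lambda>t\<in>carrier G. inv\<^bsub>\<Gamma>\<^esub> f (s \<otimes>\<^bsub>G\<^esub> t)), inv\<^bsub>G\<^esub> s)"
proof -
  interpret A: group \<Gamma> by fact
  interpret B: group G by fact
  interpret W: group "wreath \<Gamma> G" using wr_group[OF GA GG] .
  show ?thesis
    apply (rule W.inv_equality)
    using assms(3,4) unfolding wr_carrier wr_mult wr_one
    by (auto simp: PiE_iff intro!: ext)
qed


theorem lemma4p11:
  fixes \<Gamma> :: "('c, 'd) monoid_scheme" and G :: "('a, 'b) monoid_scheme"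
  assumes "group \<Gamma>" and "group G"
    and "subgroup H (wreath \<Gamma> G)"
    and "wr_pr ` H = carrier G"
    and "g \<in> carrier G" and "g \<noteq> \<one>\<^bsub>G\<^esub>"
    and "wr_restr {\<one>\<^bsub>G\<^esub>, g} ` (H \<inter> wr_base \<Gamma> G) = ({\<one>\<^bsub>G\<^esub>, g} \<rightarrow>\<^sub>E carrier \<Gamma>)"
    and "subgroup N (wreath \<Gamma> G)"
    and "derived (wreath \<Gamma> G) H \<subseteq> N"
  shows "wr_restr {\<one>\<^bsub>G\<^esub>} ` (N \<inter> wr_base \<Gamma> G) = ({\<one>\<^bsub>G\<^esub>} \<rightarrow>\<^sub>E carrier \<Gamma>)"
proof
  interpret A: group \<Gamma> by fact
  interpret B: group G by fact
  interpret W: group "wreath \<Gamma> G" using wr_group[OF assms(1,2)] .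
  have Hc: "H \<subseteq> carrier (wreath \<Gamma> G)" using assms(3) subgroup.subset by blast
  show "wr_restr {\<one>\<^bsub>G\<^esub>} ` (N \<inter> wr_base \<Gamma> G) \<subseteq> ({\<one>\<^bsub>G\<^esub>} \<rightarrow>\<^sub>E carrier \<Gamma>)"
    by (auto simp: wr_restr_def wr_base_def PiE_iff split: if_splits)
  show "({\<one>\<^bsub>G\<^esub>} \<rightarrow>\<^sub>E carrier \<Gamma>) \<subseteq> wr_restr {\<one>\<^bsub>G\<^esub>} ` (N \<inter> wr_base \<Gamma> G)"
  proof
    fix \<phi> assume \<phi>: "\<phi> \<in> {\<one>\<^bsub>G\<^esub>} \<rightarrow>\<^sub>E carrier \<Gamma>"
    define \<gamma> where "\<gamma> = \<phi> \<one>\<^bsub>G\<^esub>"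
    have \<gamma>: "\<gamma> \<in> carrier \<Gamma>" using \<phi> by (auto simp: \<gamma>_def)
    have "inv\<^bsub>G\<^esub> g \<in> wr_pr ` H" using assms(4,5) by auto
    then obtain k s where hH: "(k, s) \<in> H" and sg: "s = inv\<^bsub>G\<^esub> g"
      by (auto simp: wr_pr_def)
    have k: "k \<in> carrier G \<rightarrow>\<^sub>E carrier \<Gamma>" and s: "s \<in> carrier G"
      using hH Hc by (auto simp: wr_carrier)
    have k1: "k \<one>\<^bsub>G\<^esub> \<in> carrier \<Gamma>" using k by auto
    define \<delta> where "\<delta> = inv\<^bsub>\<Gamma>\<^esub> k \<one>\<^bsub>G\<^esub> \<otimes>\<^bsub>\<Gamma>\<^esub> \<gamma> \<otimes>\<^bsub>\<Gamma>\<^esub> k \<one>\<^bsub>G\<^esub>"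
    have \<delta>: "\<delta> \<in> carrier \<Gamma>" using k1 \<gamma> by (simp add: \<delta>_def)
    define \<psi> where "\<psi> = (\<lambda>x\<in>{\<one>\<^bsub>G\<^esub>, g}. if x = \<one>\<^bsub>G\<^esub> then \<one>\<^bsub>\<Gamma>\<^esub> else \<delta>)"
    have "\<psi> \<in> {\<one>\<^bsub>G\<^esub>, g} \<rightarrow>\<^sub>E carrier \<Gamma>" using \<delta> by (auto simp: \<psi>_def)
    then obtain a where aH: "a \<in> H" and ab: "a \<in> wr_base \<Gamma> G" and ar: "wr_restr {\<one>\<^bsub>G\<^esub>, g} a = \<psi>"
      using assms(7) by (metis (no_types, lifting) IntE imageE)
    obtain f where aeq: "a = (f, \<one>\<^bsub>G\<^esub>)" and f: "f \<in> carrier G \<rightarrow>\<^sub>E carrier \<Gamma>"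
      using ab by (auto simp: wr_base_def)
    have f1: "f \<one>\<^bsub>G\<^esub> = \<one>\<^bsub>\<Gamma>\<^esub>" using fun_cong[OF ar, of "\<one>\<^bsub>G\<^esub>"]
      by (simp add: aeq wr_restr_def \<psi>_def)
    have fg: "f g = \<delta>" using fun_cong[OF ar, of g] assms(6)
      by (simp add: aeq wr_restr_def \<psi>_def)
    define c where "c = (k, s) \<otimes>\<^bsub>wreath \<Gamma> G\<^esub> a \<otimes>\<^bsub>wreath \<Gamma> G\<^esub> inv\<^bsub>wreath \<Gamma> G\<^esub> (k, s) \<otimes>\<^bsub>wreath \<Gamma> G\<^esub> inv\<^bsub>wreath \<Gamma> G\<^esub> a"
    have "c \<in> derived (wreath \<Gamma> G) H"
      unfolding derived_def c_def using hH aH by (intro generate.incl) blast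
    hence cN: "c \<in> N" using assms(9) by blast
    have ceq: "c = ((\<lambda>x\<in>carrier G. k x \<otimes>\<^bsub>\<Gamma>\<^esub> f (inv\<^bsub>G\<^esub> s \<otimes>\<^bsub>G\<^esub> x) \<otimes>\<^bsub>\<Gamma>\<^esub> inv\<^bsub>\<Gamma>\<^esub> k x \<otimes>\<^bsub>\<Gamma>\<^esub> inv\<^bsub>\<Gamma>\<^esub> f x), \<one>\<^bsub>G\<^esub>)"
      unfolding c_def aeq using k f s
      by (auto simp: wr_mult wr_inv[OF assms(1,2)] PiE_iff B.m_assoc[symmetric] intro!: ext)
    have cb: "c \<in> wr_base \<Gamma> G" unfolding ceq wr_base_def using k f s
      by (auto simp: PiE_iff)
    have "wr_restr {\<one>\<^bsub>G\<^esub>} c = \<phi>"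
    proof (rule ext)
      fix x show "wr_restr {\<one>\<^bsub>G\<^esub>} c x = \<phi> x"
      proof (cases "x = \<one>\<^bsub>G\<^esub>")
        case True
        have "inv\<^bsub>G\<^esub> s = g" using sg assms(5) by simp
        have "k \<one>\<^bsub>G\<^esub> \<otimes>\<^bsub>\<Gamma>\<^esub> \<delta> \<otimes>\<^bsub>\<Gamma>\<^esub> inv\<^bsub>\<Gamma>\<^esub> k \<one>\<^bsub>G\<^esub> = \<gamma>"
          unfolding \<delta>_def using k1 \<gamma> by (simp add: A.m_assoc A.r_inv A.r_one flip: A.m_assoc) (simp add: A.m_assoc)
        then show ?thesis using True k1 \<gamma> \<delta> assms(5) \<open>inv\<^bsub>G\<^esub> s = g\<close>
          by (simp add: ceq wr_restr_def f1 fg \<gamma>_def)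
      next
        case False then show ?thesis using \<phi> by (auto simp: wr_restr_def PiE_iff extensional_def)
      qed
    qed
    then show "\<phi> \<in> wr_restr {\<one>\<^bsub>G\<^esub>} ` (N \<inter> wr_base \<Gamma> G)" using cN cb by blast
  qed
qed

end
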